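(* Let $\rho$ be a function quasi-norm over a $\sigma$-finite measure space $(\Omega,\Sigma,\mu)$ and suppose that $f\in L_0^+(\mu)$ with $\rho(f)<\infty$ is dominating. Then for every quasi-Banach space $X$ and every sequence $(x_n)$ of measurable functions $\Omega\to X$ with $\lim_nx_n=x$ a.e. and $\|x_n\|\le f$ a.e. for all $n$, we have $\lim_n\rho(\|x_n-x\|)=0$, i.e. $x_n\to x$ in $L_\rho(X)$.
   Context: $L_0^+(\mu)$: measurable functions $\Omega\to[0,\infty]$ modulo a.e. equality. A function quasi-norm is $\rho\colon L_0^+(\mu)\to[0,\infty]$ with (F1) $\rho(tf)=t\rho(f)$, $t\ge0$; (F2) $f\le g$ a.e. $\Rightarrow\rho(f)\le\rho(g)$; (F3) $\rho(\chi_E)<\infty$ if $\mu(E)<\infty$; (F4) for all $E$ with $\mu(E)<\infty$ and $\varepsilon>0$ there is $\delta>0$ with $\mu(A)\le\varepsilon$ whenever $A\subseteq E$ measurable and $\rho(\chi_A)\le\delta$; (F5) $\rho(f+g)\le\kappa(\rho(f)+\rho(g))$. $L_\rho(X)$ is the space of measurable $g\colon\Omega\to X$ with $\rho(\|g\|)<\infty$, quasi-normed by $\rho(\|g\|)$. A function $f\in L_0^+(\mu)$ with $\rho(f)<\infty$ is dominating if $\lim_n\rho(f_n)=0$ for every non-increasing sequence $(f_n)$ in $L_0^+(\mu)$ with $f_1\le f$ and $\lim_nf_n=0$ a.e. *)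

theory Defs
  imports "HOL-Analysis.Analysis"
begin

text \<open>L_0^+(mu) is represented by Borel measurable functions into [0,\<infinity>] (type ennreal);
  the quasi-norm rho is a map on such functions, constrained only on measurable ones.
  Axiom (F2) (stated a.e.) makes rho well defined on a.e.-classes.\<close>

definition function_quasi_norm :: "'a measure \<Rightarrow> (('a \<Rightarrow> ennreal) \<Rightarrow> ennreal) \<Rightarrow> bool" where
  "function_quasi_norm M \<rho> \<longleftrightarrow>
     \<comment> \<open>(F1)\<close>
     (\<forall>f \<in> borel_measurable M. \<forall>t::real. t \<ge> 0 \<longrightarrow>
        \<rho> (\<lambda>\<omega>. ennreal t * f \<omega>) = ennreal t * \<rho> f) \<and>
     \<comment> \<open>(F2)\<close>
     (\<forall>f \<in> borel_measurable M. \<forall>g \<in> borel_measurable M.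
        (AE \<omega> in M. f \<omega> \<le> g \<omega>) \<longrightarrow> \<rho> f \<le> \<rho> g) \<and>
     \<comment> \<open>(F3)\<close>
     (\<forall>E \<in> sets M. emeasure M E < \<infinity> \<longrightarrow> \<rho> (indicator E) < \<infinity>) \<and>
     \<comment> \<open>(F4)\<close>
     (\<forall>E \<in> sets M. emeasure M E < \<infinity> \<longrightarrow>
        (\<forall>\<epsilon>::real. \<epsilon> > 0 \<longrightarrow> (\<exists>\<delta>::real. \<delta> > 0 \<and>
           (\<forall>A \<in> sets M. A \<subseteq> E \<longrightarrow> \<rho> (indicator A) \<le> ennreal \<delta> \<longrightarrow>
              emeasure M A \<le> ennreal \<epsilon>)))) \<and>
     \<comment> \<open>(F5)\<close>
     (\<exists>\<kappa>::real. \<forall>f \<in> borel_measurable M. \<forall>g \<in> borel_measurable M.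
        \<rho> (\<lambda>\<omega>. f \<omega> + g \<omega>) \<le> ennreal \<kappa> * (\<rho> f + \<rho> g))"

definition dominating :: "'a measure \<Rightarrow> (('a \<Rightarrow> ennreal) \<Rightarrow> ennreal) \<Rightarrow> ('a \<Rightarrow> ennreal) \<Rightarrow> bool" where
  "dominating M \<rho> f \<longleftrightarrow> f \<in> borel_measurable M \<and> \<rho> f < \<infinity> \<and>
     (\<forall>fs :: nat \<Rightarrow> 'a \<Rightarrow> ennreal.
        (\<forall>n. fs n \<in> borel_measurable M) \<longrightarrow>
        (\<forall>n. AE \<omega> in M. fs (Suc n) \<omega> \<le> fs n \<omega>) \<longrightarrow>
        (AE \<omega> in M. fs 0 \<omega> \<le> f \<omega>) \<longrightarrow>
        (AE \<omega> in M. (\<lambda>n. fs n \<omega>) \<longlonglongrightarrow> 0) \<longrightarrow>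
        (\<lambda>n. \<rho> (fs n)) \<longlonglongrightarrow> 0)"

definition quasi_banach :: "('b::real_vector \<Rightarrow> real) \<Rightarrow> bool" where
  "quasi_banach q \<longleftrightarrow>
     (\<forall>x. 0 \<le> q x) \<and> (\<forall>x. q x = 0 \<longleftrightarrow> x = 0) \<and>
     (\<forall>a x. q (a *\<^sub>R x) = \<bar>a\<bar> * q x) \<and>
     (\<exists>C. \<forall>x y. q (x + y) \<le> C * (q x + q y)) \<and>
     (\<forall>s :: nat \<Rightarrow> 'b. (\<forall>e>0. \<exists>N. \<forall>m\<ge>N. \<forall>n\<ge>N. q (s m - s n) < e) \<longrightarrow>
        (\<exists>l. (\<lambda>n. q (s n - l)) \<longlonglongrightarrow> 0))"

text \<open>Measurable X-valued functions (strongly measurable): a.e. limits of simple functions.\<close>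
definition strongly_measurable :: "'a measure \<Rightarrow> ('b::real_vector \<Rightarrow> real) \<Rightarrow> ('a \<Rightarrow> 'b) \<Rightarrow> bool" where
  "strongly_measurable M q g \<longleftrightarrow>
     (\<exists>s :: nat \<Rightarrow> 'a \<Rightarrow> 'b. (\<forall>k. simple_function M (s k)) \<and>
        (AE \<omega> in M. (\<lambda>k. q (s k \<omega> - g \<omega>)) \<longlonglongrightarrow> 0))"

text \<open>rho applied to an arbitrary nonnegative function (outer extension); it coincides with
  rho on (a.e.-classes of) measurable functions.\<close>
definition rho_ext :: "'a measure \<Rightarrow> (('a \<Rightarrow> ennreal) \<Rightarrow> ennreal) \<Rightarrow> ('a \<Rightarrow> ennreal) \<Rightarrow> ennreal" where
  "rho_ext M \<rho> g = (INF h \<in> {h \<in> borel_measurable M. AE \<omega> in M. g \<omega> \<le> h \<omega>}. \<rho> h)"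

end

theory Submission
  imports Defs
begin


lemma liminf_upper:
  fixes X Y :: "nat \<Rightarrow> ennreal"
  assumes "\<And>i. X i \<le> c + Y i" "Y \<longlonglongrightarrow> 0"
  shows "liminf X \<le> c"
proof -
  have "liminf X \<le> liminf (\<lambda>i. c + Y i)" using assms(1) by (intro Liminf_mono) auto
  also have "\<dots> = c"
  proof -
    have "(\<lambda>i. c + Y i) \<longlonglongrightarrow> c + 0" by (intro tendsto_add tendsto_const assms(2))
    then show ?thesis by (simp add: lim_imp_Liminf)
  qed
  finally show ?thesis .
qed

lemma liminf_lower:
  fixes X Y :: "nat \<Rightarrow> ennreal"
  assumes "\<And>i. c \<le> X i + Y i" "Y \<longlonglongrightarrow> d"
  shows "c \<le> liminf X + d"
proof (rule ennreal_le_epsilon)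
  fix e :: real assume d: "liminf X + d < top" and e: "0 < e"
  then have "d < top" by (auto simp: top_unique)
  then have "d < d + ennreal e" using e
    by (cases d rule: ennreal_cases) (auto simp flip: ennreal_plus simp: ennreal_less_iff)
  then have ev: "eventually (\<lambda>i. Y i < d + ennreal e) sequentially"
    by (rule order_tendstoD(2)[OF assms(2)])
  have "c = liminf (\<lambda>i. c)" by (simp add: Liminf_const)
  also have "\<dots> \<le> liminf (\<lambda>i. X i + (d + ennreal e))"
    by (intro Liminf_mono eventually_mono[OF ev]) (metis assms(1) add_left_mono less_imp_le order_trans)
  also have "\<dots> = liminf X + (d + ennreal e)" by (simp add: Liminf_add_const)
  finally show "c \<le> liminf X + d + ennreal e" by (simp add: add.assoc)
qed



lemma ennreal_tendsto_cq:
  fixes g :: "nat \<Rightarrow> real"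
  assumes "g \<longlonglongrightarrow> 0"
  shows "(\<lambda>n. ennreal (c * g n)) \<longlonglongrightarrow> 0"
proof -
  have "(\<lambda>n. c * g n) \<longlonglongrightarrow> c * 0" by (intro tendsto_mult tendsto_const assms)
  then have "(\<lambda>n. ennreal (c * g n)) \<longlonglongrightarrow> ennreal (c * 0)" by (rule tendsto_ennrealI)
  then show ?thesis by simp
qed

lemma chain4:
  fixes q :: "'b::real_vector \<Rightarrow> real"
  assumes q0: "\<And>x. 0 \<le> q x" and C1: "1 \<le> C" and tri: "\<And>x y. q (x + y) \<le> C * (q x + q y)"
  shows "q (p1 + (p2 + (p3 + p4))) \<le> C^3 * q p1 + C^3 * q p2 + C^3 * q p3 + C^3 * q p4"
proof -
  have a: "q (p3 + p4) \<le> C * q p3 + C * q p4" using tri[of p3 p4] by (simp add: algebra_simps)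
  have b: "q (p2 + (p3 + p4)) \<le> C * q p2 + C * (C * q p3 + C * q p4)"
    using tri[of p2 "p3+p4"] mult_left_mono[OF a, of C] C1 by (simp add: algebra_simps)
  have c: "q (p1 + (p2 + (p3 + p4))) \<le> C * q p1 + C * (C * q p2 + C * (C * q p3 + C * q p4))"
    using tri[of p1 "p2 + (p3+p4)"] mult_left_mono[OF b, of C] C1 by (simp add: algebra_simps)
  have c2: "C \<le> C*C" using C1 mult_left_mono[of 1 C C] by simp
  have c3: "C*C \<le> C*C*C" using C1 mult_left_mono[of 1 C "C*C"] by (simp add: mult.commute)
  have "C * q p1 \<le> C*C*C * q p1" using mult_right_mono[OF order_trans[OF c2 c3] q0] .
  moreover have "C*C * q p2 \<le> C*C*C * q p2" using mult_right_mono[OF c3 q0] .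
  ultimately have "C * q p1 \<le> C^3 * q p1" "C*C * q p2 \<le> C^3 * q p2" "C*C*C * q p3 \<le> C^3 * q p3" "C*C*C * q p4 \<le> C^3 * q p4"
    by (simp_all add: power3_eq_cube)
  then show ?thesis using c by (simp add: algebra_simps)
qed

lemma pointwise_bounds:
  fixes q :: "'b::real_vector \<Rightarrow> real"
  assumes q0: "\<And>x. 0 \<le> q x" and C1: "1 \<le> C" and tri: "\<And>x y. q (x + y) \<le> C * (q x + q y)"
    and sym: "\<And>x. q (- x) = q x"
    and u: "(\<lambda>j. q (u j - a)) \<longlonglongrightarrow> 0"
    and w: "(\<lambda>m. q (w m - b)) \<longlonglongrightarrow> 0"
    and v: "\<And>m. (\<lambda>i. q (v m i - w m)) \<longlonglongrightarrow> 0"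
  defines "L \<equiv> liminf (\<lambda>j. liminf (\<lambda>m. liminf (\<lambda>i. ennreal (C^3 * q (u j - v m i)))))"
  shows "ennreal (q (a - b)) \<le> L" and "L \<le> ennreal (C^3 * C^3 * q (a - b))"
proof -
  define K where "K = C^3"
  have K0: "0 \<le> K" using C1 by (simp add: K_def)
  have sw: "q (y - z) = q (z - y)" for y z using sym[of "z - y"] by simp
  have ch: "q (p1 + (p2 + (p3 + p4))) \<le> K * q p1 + K * q p2 + K * q p3 + K * q p4" for p1 p2 p3 p4
    unfolding K_def by (rule chain4[OF q0 C1 tri])
  have E: "ennreal (r1 + r2 + r3 + r4) = ennreal r1 + ennreal r2 + ennreal r3 + ennreal r4"
    if "0 \<le> r1" "0 \<le> r2" "0 \<le> r3" "0 \<le> r4" for r1 r2 r3 r4 :: real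
    using that by (simp add: ennreal_plus)
  have u': "(\<lambda>j. q (a - u j)) \<longlonglongrightarrow> 0" using u by (simp add: sw)
  have w': "(\<lambda>m. q (b - w m)) \<longlonglongrightarrow> 0" using w by (simp add: sw)
  have v': "(\<lambda>i. q (w m - v m i)) \<longlonglongrightarrow> 0" for m using v[of m] by (simp add: sw)
  {
    fix j m
    have "ennreal (q (a - b)) \<le> liminf (\<lambda>i. ennreal (K * q (u j - v m i)))
        + (ennreal (K * q (a - u j)) + 0 + ennreal (K * q (w m - b)))"
    proof (rule liminf_lower)
      fix i
      have "a - b = (a - u j) + ((u j - v m i) + ((v m i - w m) + (w m - b)))" by simp
      then have "q (a - b) \<le> K * q (a - u j) + K * q (u j - v m i) + K * q (v m i - w m) + K * q (w m - b)"
        using ch by metis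
      then have "ennreal (q (a - b)) \<le> ennreal (K * q (a - u j) + K * q (u j - v m i) + K * q (v m i - w m) + K * q (w m - b))"
        by (rule ennreal_leI)
      also have "\<dots> = ennreal (K * q (u j - v m i)) + (ennreal (K * q (a - u j)) + ennreal (K * q (v m i - w m)) + ennreal (K * q (w m - b)))"
        using K0 q0 by (subst E) (auto simp: algebra_simps)
      finally show "ennreal (q (a - b)) \<le> ennreal (K * q (u j - v m i)) + (ennreal (K * q (a - u j)) + ennreal (K * q (v m i - w m)) + ennreal (K * q (w m - b)))" .
    next
      show "(\<lambda>i. ennreal (K * q (a - u j)) + ennreal (K * q (v m i - w m)) + ennreal (K * q (w m - b)))
          \<longlonglongrightarrow> ennreal (K * q (a - u j)) + 0 + ennreal (K * q (w m - b))"
        by (intro tendsto_add tendsto_const ennreal_tendsto_cq v)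
    qed
  } note l1 = this
  {
    fix j
    have "ennreal (q (a - b)) \<le> liminf (\<lambda>m. liminf (\<lambda>i. ennreal (K * q (u j - v m i))))
        + (ennreal (K * q (a - u j)) + 0)"
    proof (rule liminf_lower)
      fix m show "ennreal (q (a - b)) \<le> liminf (\<lambda>i. ennreal (K * q (u j - v m i))) + (ennreal (K * q (a - u j)) + ennreal (K * q (w m - b)))"
        using l1[of j m] by simp
    next
      show "(\<lambda>m. ennreal (K * q (a - u j)) + ennreal (K * q (w m - b))) \<longlonglongrightarrow> ennreal (K * q (a - u j)) + 0"
        by (intro tendsto_add tendsto_const ennreal_tendsto_cq w)
    qed
  } note l2 = this
  have "ennreal (q (a - b)) \<le> L + 0"
    unfolding L_def K_def[symmetric]
  proof (rule liminf_lower)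
    fix j show "ennreal (q (a - b)) \<le> liminf (\<lambda>m. liminf (\<lambda>i. ennreal (K * q (u j - v m i)))) + ennreal (K * q (a - u j))"
      using l2[of j] by simp
  next
    show "(\<lambda>j. ennreal (K * q (a - u j))) \<longlonglongrightarrow> 0" by (intro ennreal_tendsto_cq u')
  qed
  then show "ennreal (q (a - b)) \<le> L" by simp
  have KK0: "0 \<le> K * K" using K0 by simp
  {
    fix j m
    have "liminf (\<lambda>i. ennreal (K * q (u j - v m i))) \<le>
       ennreal (K * K * q (u j - a)) + ennreal (K * K * q (a - b)) + ennreal (K * K * q (b - w m))"
    proof (rule liminf_upper)
      fix i
      have "u j - v m i = (u j - a) + ((a - b) + ((b - w m) + (w m - v m i)))" by simp
      then have "q (u j - v m i) \<le> K * q (u j - a) + K * q (a - b) + K * q (b - w m) + K * q (w m - v m i)"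
        using ch by metis
      then have "K * q (u j - v m i) \<le> K * K * q (u j - a) + K * K * q (a - b) + K * K * q (b - w m) + K * K * q (w m - v m i)"
        using mult_left_mono[OF _ K0] by (fastforce simp: algebra_simps)
      then have "ennreal (K * q (u j - v m i)) \<le> ennreal (K * K * q (u j - a) + K * K * q (a - b) + K * K * q (b - w m) + K * K * q (w m - v m i))"
        by (rule ennreal_leI)
      also have "\<dots> = ennreal (K * K * q (u j - a)) + ennreal (K * K * q (a - b)) + ennreal (K * K * q (b - w m)) + ennreal (K * K * q (w m - v m i))"
        using KK0 q0 by (subst E) auto
      finally show "ennreal (K * q (u j - v m i)) \<le> ennreal (K * K * q (u j - a)) + ennreal (K * K * q (a - b)) + ennreal (K * K * q (b - w m)) + ennreal (K * K * q (w m - v m i))" .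
    next
      show "(\<lambda>i. ennreal (K * K * q (w m - v m i))) \<longlonglongrightarrow> 0" by (intro ennreal_tendsto_cq v')
    qed
  } note h1 = this
  {
    fix j
    have "liminf (\<lambda>m. liminf (\<lambda>i. ennreal (K * q (u j - v m i)))) \<le>
       ennreal (K * K * q (u j - a)) + ennreal (K * K * q (a - b))"
      by (rule liminf_upper[OF h1]) (intro ennreal_tendsto_cq w')
  } note h2 = this
  have "L \<le> ennreal (K * K * q (a - b))"
    unfolding L_def K_def[symmetric]
    by (rule liminf_upper[where Y="\<lambda>j. ennreal (K * K * q (u j - a))"]) (use h2 in \<open>auto simp: add.commute intro: ennreal_tendsto_cq u\<close>)
  then show "L \<le> ennreal (C^3 * C^3 * q (a - b))" by (simp add: K_def)
qed


lemma le_of_tendsto_extra: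
  fixes c a :: ennreal and Y :: "nat \<Rightarrow> ennreal"
  assumes "\<And>m. c \<le> a + Y m" "Y \<longlonglongrightarrow> 0"
  shows "c \<le> a"
proof -
  have "c \<le> liminf (\<lambda>_. a) + 0" by (rule liminf_lower[OF assms])
  then show ?thesis by (simp add: Liminf_const)
qed

theorem proposition3p21:
  fixes M :: "'a measure" and \<rho> :: "('a \<Rightarrow> ennreal) \<Rightarrow> ennreal" and f :: "'a \<Rightarrow> ennreal"
    and q :: "'b::real_vector \<Rightarrow> real" and xs :: "nat \<Rightarrow> 'a \<Rightarrow> 'b" and x :: "'a \<Rightarrow> 'b"
  assumes "sigma_finite_measure M"
    and "function_quasi_norm M \<rho>"
    and "dominating M \<rho> f"
    and "quasi_banach q"
    and "\<And>n. strongly_measurable M q (xs n)"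
    and "AE \<omega> in M. (\<lambda>n. q (xs n \<omega> - x \<omega>)) \<longlonglongrightarrow> 0"
    and "\<And>n. AE \<omega> in M. ennreal (q (xs n \<omega>)) \<le> f \<omega>"
  shows "(\<lambda>n. rho_ext M \<rho> (\<lambda>\<omega>. ennreal (q (xs n \<omega> - x \<omega>)))) \<longlonglongrightarrow> 0"
proof -
  note qb = assms(4)[unfolded quasi_banach_def]
  have q0: "\<And>v. 0 \<le> q v" using qb[THEN conjunct1] by blast
  have qs: "\<And>a v. q (a *\<^sub>R v) = \<bar>a\<bar> * q v" using qb[THEN conjunct2, THEN conjunct2, THEN conjunct1] by blast
  obtain C0 where C0: "\<And>v w. q (v + w) \<le> C0 * (q v + q w)" using qb[THEN conjunct2, THEN conjunct2, THEN conjunct2, THEN conjunct1] by blast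
  define C where "C = max C0 1"
  have C1: "1 \<le> C" by (simp add: C_def)
  have tri: "q (v + w) \<le> C * (q v + q w)" for v w
    using C0[of v w] mult_right_mono[of C0 C "q v + q w"] q0[of v] q0[of w] by (simp add: C_def)
  have sym: "q (- v) = q v" for v using qs[of "-1" v] by simp
  define K where "K = C^3"
  have K0: "0 \<le> K" using C1 by (simp add: K_def)
  have "\<forall>n. \<exists>s :: nat \<Rightarrow> 'a \<Rightarrow> 'b. (\<forall>k. simple_function M (s k)) \<and>
        (AE \<omega> in M. (\<lambda>k. q (s k \<omega> - xs n \<omega>)) \<longlonglongrightarrow> 0)"
    using assms(5) unfolding strongly_measurable_def by blast
  then have "\<exists>s. \<forall>n. (\<forall>k. simple_function M (s n k)) \<and>
        (AE \<omega> in M. (\<lambda>k. q (s n k \<omega> - xs n \<omega>)) \<longlonglongrightarrow> 0)"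
    by (rule choice)
  then obtain s :: "nat \<Rightarrow> nat \<Rightarrow> 'a \<Rightarrow> 'b" where
    s_all: "\<forall>n. (\<forall>k. simple_function M (s n k)) \<and>
        (AE \<omega> in M. (\<lambda>k. q (s n k \<omega> - xs n \<omega>)) \<longlonglongrightarrow> 0)" by blast
  have s_simple: "\<And>n k. simple_function M (s n k)" using s_all by blast
  have s_conv: "\<And>n. AE \<omega> in M. (\<lambda>k. q (s n k \<omega> - xs n \<omega>)) \<longlonglongrightarrow> 0" using s_all by blast
  define E where "E k \<omega> = liminf (\<lambda>j. liminf (\<lambda>m. liminf (\<lambda>i. ennreal (K * q (s k j \<omega> - s m i \<omega>)))))" for k \<omega>
  have E_meas: "E k \<in> borel_measurable M" for k
  proof -
    have "(\<lambda>\<omega>. ennreal (K * q (s k j \<omega> - s m i \<omega>))) \<in> borel_measurable M" for j m i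
    proof -
      have "simple_function M (\<lambda>\<omega>. s k j \<omega> - s m i \<omega>)"
        using s_simple[of k j] s_simple[of m i] by (rule simple_function_diff)
      then have "simple_function M ((\<lambda>v. ennreal (K * q v)) \<circ> (\<lambda>\<omega>. s k j \<omega> - s m i \<omega>))"
        by (rule simple_function_compose)
      then show ?thesis by (simp add: o_def borel_measurable_simple_function)
    qed
    then show ?thesis unfolding E_def by (intro borel_measurable_liminf)
  qed
  have dom: "dominating M \<rho> f" using assms(3) .
  have good: "AE \<omega> in M. (\<forall>k. (\<lambda>j. q (s k j \<omega> - xs k \<omega>)) \<longlonglongrightarrow> 0) \<and>
       (\<lambda>n. q (xs n \<omega> - x \<omega>)) \<longlonglongrightarrow> 0 \<and> (\<forall>n. ennreal (q (xs n \<omega>)) \<le> f \<omega>)"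
  proof -
    have "AE \<omega> in M. \<forall>k. (\<lambda>j. q (s k j \<omega> - xs k \<omega>)) \<longlonglongrightarrow> 0"
      using s_conv by (simp add: AE_all_countable)
    moreover have "AE \<omega> in M. \<forall>n. ennreal (q (xs n \<omega>)) \<le> f \<omega>"
      using assms(7) by (simp add: AE_all_countable)
    ultimately show ?thesis using assms(6) by eventually_elim blast
  qed
  define B where "B = K * K * C * (1 + C)"
  have B0: "0 < B" using C1 by (simp add: B_def K_def)
  define H where "H n \<omega> = (SUP k\<in>{n..}. E k \<omega>)" for n \<omega>
  have H_meas: "H n \<in> borel_measurable M" for n unfolding H_def using E_meas by measurable
  have H_dec: "H (Suc n) \<omega> \<le> H n \<omega>" for n \<omega> unfolding H_def by (intro SUP_subset_mono) auto
  have pw: "ennreal (q (xs k \<omega> - x \<omega>)) \<le> E k \<omega> \<and> E k \<omega> \<le> ennreal (K * K * q (xs k \<omega> - x \<omega>))"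
    if g: "\<forall>k. (\<lambda>j. q (s k j \<omega> - xs k \<omega>)) \<longlonglongrightarrow> 0" "(\<lambda>n. q (xs n \<omega> - x \<omega>)) \<longlonglongrightarrow> 0" for k \<omega>
    using pointwise_bounds[OF q0 C1 tri sym, of "\<lambda>j. s k j \<omega>" "xs k \<omega>" "\<lambda>m. xs m \<omega>" "x \<omega>" "\<lambda>m i. s m i \<omega>"] g
    unfolding E_def K_def by auto
  have main: "AE \<omega> in M. (\<forall>n. ennreal (q (xs n \<omega> - x \<omega>)) \<le> H n \<omega>) \<and> (\<lambda>n. H n \<omega>) \<longlonglongrightarrow> 0 \<and> H 0 \<omega> \<le> ennreal B * f \<omega>"
    using good
  proof eventually_elim
    case (elim \<omega>)
    then have g1: "\<forall>k. (\<lambda>j. q (s k j \<omega> - xs k \<omega>)) \<longlonglongrightarrow> 0" and g2: "(\<lambda>n. q (xs n \<omega> - x \<omega>)) \<longlonglongrightarrow> 0"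
      and g3: "\<And>n. ennreal (q (xs n \<omega>)) \<le> f \<omega>" by auto
    note pw' = pw[OF g1 g2]
    have a1: "ennreal (q (xs n \<omega> - x \<omega>)) \<le> H n \<omega>" for n
      using pw'[of n] unfolding H_def by (meson SUP_upper atLeast_iff order_refl order_trans)
    have Et: "(\<lambda>k. E k \<omega>) \<longlonglongrightarrow> 0"
    proof (rule tendsto_sandwich[of "\<lambda>_. 0" _ _ "\<lambda>k. ennreal (K * K * q (xs k \<omega> - x \<omega>))"])
      show "\<forall>\<^sub>F n in sequentially. 0 \<le> E n \<omega>" by simp
      show "\<forall>\<^sub>F n in sequentially. E n \<omega> \<le> ennreal (K * K * q (xs n \<omega> - x \<omega>))" using pw' by simp
      show "(\<lambda>k. ennreal (K * K * q (xs k \<omega> - x \<omega>))) \<longlonglongrightarrow> 0" by (rule ennreal_tendsto_cq[OF g2])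
    qed simp
    have "(\<lambda>n. H n \<omega>) \<longlonglongrightarrow> (INF n. H n \<omega>)"
      by (rule LIMSEQ_INF) (simp add: decseq_Suc_iff H_dec)
    moreover have "(INF n. H n \<omega>) = limsup (\<lambda>k. E k \<omega>)" unfolding H_def limsup_INF_SUP ..
    moreover have "limsup (\<lambda>k. E k \<omega>) = 0" using Et by (simp add: lim_imp_Limsup)
    ultimately have a2: "(\<lambda>n. H n \<omega>) \<longlonglongrightarrow> 0" by simp
    have qx: "ennreal (q (x \<omega>)) \<le> ennreal C * f \<omega>"
    proof (rule le_of_tendsto_extra)
      fix m
      have "q (x \<omega>) = q (xs m \<omega> + (x \<omega> - xs m \<omega>))" by simp
      also have "\<dots> \<le> C * q (xs m \<omega>) + C * q (x \<omega> - xs m \<omega>)" using tri[of "xs m \<omega>" "x \<omega> - xs m \<omega>"] by (simp add: algebra_simps)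
      finally have "ennreal (q (x \<omega>)) \<le> ennreal (C * q (xs m \<omega>)) + ennreal (C * q (x \<omega> - xs m \<omega>))"
        using C1 q0 by (simp add: ennreal_plus[symmetric] ennreal_leI del: ennreal_plus)
      also have "\<dots> \<le> ennreal C * f \<omega> + ennreal (C * q (x \<omega> - xs m \<omega>))"
        using g3[of m] C1 q0 by (auto simp: ennreal_mult intro!: add_right_mono mult_left_mono)
      finally show "ennreal (q (x \<omega>)) \<le> ennreal C * f \<omega> + ennreal (C * q (x \<omega> - xs m \<omega>))" .
    next
      have "(\<lambda>m. q (x \<omega> - xs m \<omega>)) \<longlonglongrightarrow> 0"
      proof -
        have "(\<lambda>m. q (x \<omega> - xs m \<omega>)) = (\<lambda>m. q (xs m \<omega> - x \<omega>))"
          by (rule ext) (metis sym minus_diff_eq)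
        then show ?thesis using g2 by simp
      qed
      then show "(\<lambda>m. ennreal (C * q (x \<omega> - xs m \<omega>))) \<longlonglongrightarrow> 0" by (rule ennreal_tendsto_cq)
    qed
    have Eb: "E k \<omega> \<le> ennreal B * f \<omega>" for k
    proof -
      have "q (xs k \<omega> - x \<omega>) \<le> C * q (xs k \<omega>) + C * q (x \<omega>)"
        using tri[of "xs k \<omega>" "- x \<omega>"] sym by (simp add: algebra_simps)
      then have "ennreal (q (xs k \<omega> - x \<omega>)) \<le> ennreal C * ennreal (q (xs k \<omega>)) + ennreal C * ennreal (q (x \<omega>))"
        using C1 q0 by (simp add: ennreal_plus[symmetric] ennreal_mult[symmetric] ennreal_leI del: ennreal_plus)
      also have "\<dots> \<le> ennreal C * f \<omega> + ennreal C * (ennreal C * f \<omega>)"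
        using g3[of k] qx by (intro add_mono mult_left_mono) auto
      also have "\<dots> = ennreal (C * (1 + C)) * f \<omega>"
        using C1 by (simp add: ennreal_mult ennreal_plus distrib_left distrib_right mult.assoc)
      finally have x1: "ennreal (q (xs k \<omega> - x \<omega>)) \<le> ennreal (C * (1 + C)) * f \<omega>" .
      have "E k \<omega> \<le> ennreal (K * K) * ennreal (q (xs k \<omega> - x \<omega>))"
        using pw'[of k] K0 q0 by (simp add: ennreal_mult)
      also have "\<dots> \<le> ennreal (K * K) * (ennreal (C * (1 + C)) * f \<omega>)"
        using x1 by (rule mult_left_mono) simp
      also have "\<dots> = ennreal B * f \<omega>"
        using K0 C1 by (simp add: B_def ennreal_mult mult.assoc)
      finally show ?thesis .
    qed
    have a3: "H 0 \<omega> \<le> ennreal B * f \<omega>" unfolding H_def using Eb by (intro SUP_least)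
    show ?case using a1 a2 a3 by blast
  qed
  define fs where "fs n \<omega> = ennreal (1 / B) * H n \<omega>" for n \<omega>
  have fs_lim: "(\<lambda>n. \<rho> (fs n)) \<longlonglongrightarrow> 0"
  proof -
    have "(\<forall>n. fs n \<in> borel_measurable M) \<longrightarrow>
        (\<forall>n. AE \<omega> in M. fs (Suc n) \<omega> \<le> fs n \<omega>) \<longrightarrow>
        (AE \<omega> in M. fs 0 \<omega> \<le> f \<omega>) \<longrightarrow>
        (AE \<omega> in M. (\<lambda>n. fs n \<omega>) \<longlonglongrightarrow> 0) \<longrightarrow>
        (\<lambda>n. \<rho> (fs n)) \<longlonglongrightarrow> 0"
      using dom[unfolded dominating_def, THEN conjunct2, THEN conjunct2] by blast
    moreover have "\<forall>n. fs n \<in> borel_measurable M" unfolding fs_def using H_meas by (intro allI) measurable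
    moreover have "\<forall>n. AE \<omega> in M. fs (Suc n) \<omega> \<le> fs n \<omega>"
      unfolding fs_def using H_dec by (intro allI AE_I2 mult_left_mono) auto
    moreover have "AE \<omega> in M. fs 0 \<omega> \<le> f \<omega>"
      using main
    proof eventually_elim
      case (elim \<omega>)
      then have "fs 0 \<omega> \<le> ennreal (1 / B) * (ennreal B * f \<omega>)" unfolding fs_def
        by (intro mult_left_mono) auto
      also have "\<dots> = f \<omega>" using B0 by (simp add: mult.assoc[symmetric] ennreal_mult[symmetric])
      finally show ?case .
    qed
    moreover have "AE \<omega> in M. (\<lambda>n. fs n \<omega>) \<longlonglongrightarrow> 0"
      using main
    proof eventually_elim
      case (elim \<omega>)
      then have "(\<lambda>n. ennreal (1 / B) * H n \<omega>) \<longlonglongrightarrow> ennreal (1 / B) * 0"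
        by (intro ennreal_tendsto_cmult) auto
      then show ?case by (simp add: fs_def)
    qed
    ultimately show ?thesis by blast
  qed
  have F1: "\<forall>g \<in> borel_measurable M. \<forall>t::real. t \<ge> 0 \<longrightarrow> \<rho> (\<lambda>\<omega>. ennreal t * g \<omega>) = ennreal t * \<rho> g"
    using assms(2)[unfolded function_quasi_norm_def, THEN conjunct1] by blast
  have rH: "\<rho> (H n) = ennreal B * \<rho> (fs n)" for n
  proof -
    have "(\<lambda>\<omega>. ennreal B * fs n \<omega>) = H n"
      using B0 by (auto simp: fs_def mult.assoc[symmetric] ennreal_mult[symmetric])
    moreover have "fs n \<in> borel_measurable M" unfolding fs_def using H_meas by measurable
    ultimately show ?thesis using F1 B0 by (metis less_imp_le)
  qed
  have rH_lim: "(\<lambda>n. \<rho> (H n)) \<longlonglongrightarrow> 0"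
    unfolding rH using ennreal_tendsto_cmult[OF _ fs_lim, of "ennreal B"] by simp
  have ext_le: "rho_ext M \<rho> (\<lambda>\<omega>. ennreal (q (xs n \<omega> - x \<omega>))) \<le> \<rho> (H n)" for n
    unfolding rho_ext_def
  proof (rule INF_lower)
    have "AE \<omega> in M. ennreal (q (xs n \<omega> - x \<omega>)) \<le> H n \<omega>" using main by eventually_elim blast
    then show "H n \<in> {h \<in> borel_measurable M. AE \<omega> in M. ennreal (q (xs n \<omega> - x \<omega>)) \<le> h \<omega>}"
      using H_meas by blast
  qed
  show ?thesis
    by (rule tendsto_sandwich[of "\<lambda>_. 0" _ _ "\<lambda>n. \<rho> (H n)"]) (use ext_le rH_lim in auto)
qed

end
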